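(* Let $\mathbf{u}=(u_n)$ be an a-sequence. The following are equivalent: (a) the sequence of ratios $(q_n)$ is bounded; (b) $s_\mathbf{u}(\mathbb{T})\le\mathbb{Q}/\mathbb{Z}$; (c) $s_\mathbf{u}(\mathbb{T})$ is countable; (d) $s_\mathbf{u}(\mathbb{T})$ is an $F_\sigma$-subset of $\mathbb{T}$ (with its usual compact topology); (e) $s_\mathbf{u}(\mathbb{T})$ is $\tau^*_\mathbf{u}$-open; (f) $s_\mathbf{u}(\mathbb{T})$ is $\tau_\mathbf{u}$-open.
   Context: An a-sequence is a strictly increasing sequence of integers $\mathbf{u}=(u_n)_{n\in\mathbb{N}}$ with $u_n\mid u_{n+1}$ for all $n$; its ratios are $q_0=u_0$ and $q_n=u_n/u_{n-1}$ for $n>0$. $\mathbb{T}=\mathbb{R}/\mathbb{Z}$, $\|x\|$ is the distance from $x$ to the nearest integer, $d(x,y)=\|x-y\|$. $s_\mathbf{u}(\mathbb{T})=\{x\in\mathbb{T}: u_nx\to0\text{ in }\mathbb{T}\}$. $\varrho_\mathbf{u}(x,y)=\sup_n\max\{d(x,y),d(u_nx,u_ny)\}$ is a metric on $\mathbb{T}$ and $\tau_\mathbf{u}$ is the topology it induces. $\tau^*_\mathbf{u}$ is the group topology on $\mathbb{T}$ whose filter of neighbourhoods of $0$ is generated by the sets $W_n=\overline{\{x:\varrho_\mathbf{u}(x,0)<1/n\}}$, $n\in\mathbb{N}$, where the closure is taken in the usual topology of $\mathbb{T}$. *)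

theory Defs
  imports "HOL-Analysis.Analysis"
begin

text \<open>The circle group T = R/Z is represented through R: a point of T is given by any
real representative, and a subset of T by its (Z-periodic) preimage in R.\<close>

definition a_seq :: "(nat \<Rightarrow> int) \<Rightarrow> bool" where
  "a_seq u \<longleftrightarrow> strict_mono u \<and> (\<forall>n. u n dvd u (Suc n))"

definition ratio :: "(nat \<Rightarrow> int) \<Rightarrow> nat \<Rightarrow> int" where
  "ratio u n = (if n = 0 then u 0 else u n div u (n - 1))"

definition tnorm :: "real \<Rightarrow> real" where
  "tnorm x = infdist x \<int>"

definition tdist :: "real \<Rightarrow> real \<Rightarrow> real" where
  "tdist x y = tnorm (x - y)"

definition s_u :: "(nat \<Rightarrow> int) \<Rightarrow> real set" where
  "s_u u = {x. ((\<lambda>n. tnorm (of_int (u n) * x)) \<longlongrightarrow> 0) sequentially}"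

definition rho :: "(nat \<Rightarrow> int) \<Rightarrow> real \<Rightarrow> real \<Rightarrow> real" where
  "rho u x y = (SUP n. max (tdist x y) (tdist (of_int (u n) * x) (of_int (u n) * y)))"

definition tau_open :: "(nat \<Rightarrow> int) \<Rightarrow> real set \<Rightarrow> bool" where
  "tau_open u A \<longleftrightarrow> (\<forall>x\<in>A. \<exists>e>0. \<forall>y. rho u x y < e \<longrightarrow> y \<in> A)"

text \<open>W_n: closure (usual topology) of the rho-ball of radius 1/n around 0.
  The closure of a Z-periodic subset of R is the preimage of the closure in T.\<close>
definition W :: "(nat \<Rightarrow> int) \<Rightarrow> nat \<Rightarrow> real set" where
  "W u n = closure {x. rho u x 0 < 1 / real n}"

text \<open>Openness in the group topology tau*_u whose neighbourhood filter of 0 is generated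
  by the W_n (n \<ge> 1): A is open iff each x in A has some x + W_n inside A.\<close>
definition tau_star_open :: "(nat \<Rightarrow> int) \<Rightarrow> real set \<Rightarrow> bool" where
  "tau_star_open u A \<longleftrightarrow> (\<forall>x\<in>A. \<exists>n\<ge>1. (\<lambda>w. x + w) ` W u n \<subseteq> A)"

end

theory Submission
  imports Defs
begin


lemma tnorm_round: "tnorm x = \<bar>x - of_int (round x)\<bar>"
proof -
  have ne: "(\<int>::real set) \<noteq> {}" by (metis Ints_0 empty_iff)
  have le: "tnorm x \<le> \<bar>x - of_int (round x)\<bar>"
    unfolding tnorm_def using infdist_le[of "of_int (round x)" "\<int>" x] by (simp add: dist_real_def)
  have ge: "\<bar>x - of_int (round x)\<bar> \<le> tnorm x"
    unfolding tnorm_def infdist_notempty[OF ne]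
  proof (rule cINF_greatest[OF ne])
    fix a :: real assume "a \<in> \<int>"
    then obtain k where k: "a = of_int k" by (auto elim: Ints_cases)
    show "\<bar>x - of_int (round x)\<bar> \<le> dist x a"
    proof (rule ccontr)
      assume "\<not> ?thesis"
      hence "\<bar>x - of_int k\<bar> < \<bar>x - of_int (round x)\<bar>" using k by (simp add: dist_real_def)
      moreover have "\<bar>of_int (round x) - x\<bar> \<le> 1/2" by (rule of_int_round_abs_le)
      ultimately have "\<bar>of_int k - of_int (round x)\<bar> < (1::real)" by linarith
      hence "\<bar>k - round x\<bar> < 1" by linarith
      hence "k = round x" by linarith
      thus False using \<open>\<bar>x - of_int k\<bar> < \<bar>x - of_int (round x)\<bar>\<close> by simp
    qed
  qed
  show ?thesis using le ge by linarith
qed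

lemma tnorm_le_int: "tnorm x \<le> \<bar>x - of_int k\<bar>"
  unfolding tnorm_def using infdist_le[of "of_int k" "\<int>" x] by (simp add: dist_real_def)

lemma tnorm_nonneg: "0 \<le> tnorm x"
  by (simp add: tnorm_def infdist_nonneg)

lemma tnorm_le_half: "tnorm x \<le> 1/2"
  using tnorm_round[of x] of_int_round_abs_le[of x] by linarith

lemma tnorm_le_abs: "tnorm x \<le> \<bar>x\<bar>"
  using tnorm_le_int[of x 0] by simp

lemma tnorm_small: "\<bar>x\<bar> \<le> 1/2 \<Longrightarrow> tnorm x = \<bar>x\<bar>"
proof -
  assume a: "\<bar>x\<bar> \<le> 1/2"
  have "\<bar>x\<bar> \<le> tnorm x"
  proof (rule ccontr)
    assume "\<not> ?thesis"
    hence "\<bar>x - of_int (round x)\<bar> < \<bar>x\<bar>" using tnorm_round[of x] by simp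
    hence "\<bar>of_int (round x)\<bar> < (1::real)" using a by linarith
    hence "round x = 0" by linarith
    thus False using \<open>\<bar>x - of_int (round x)\<bar> < \<bar>x\<bar>\<close> by simp
  qed
  thus ?thesis using tnorm_le_abs[of x] by linarith
qed

lemma tnorm_add_int: "tnorm (x + of_int k) = tnorm x"
proof -
  have "tnorm (x + of_int k) \<le> tnorm x"
    using tnorm_le_int[of "x + of_int k" "round x + k"] tnorm_round[of x] by simp
  moreover have "tnorm x \<le> tnorm (x + of_int k)"
    using tnorm_le_int[of x "round (x + of_int k) - k"] tnorm_round[of "x + of_int k"] by simp
  ultimately show ?thesis by linarith
qed

lemma tnorm_Ints: "y \<in> \<int> \<Longrightarrow> tnorm (x + y) = tnorm x"
  by (auto elim!: Ints_cases simp: tnorm_add_int)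

lemma tnorm_minus: "tnorm (- x) = tnorm x"
proof -
  have "tnorm (-x) \<le> tnorm x"
    using tnorm_le_int[of "-x" "- round x"] tnorm_round[of x] by simp
  moreover have "tnorm x \<le> tnorm (-x)"
    using tnorm_le_int[of x "- round (-x)"] tnorm_round[of "-x"] by simp
  ultimately show ?thesis by linarith
qed

lemma tnorm_triangle: "tnorm (x + y) \<le> tnorm x + tnorm y"
  using tnorm_le_int[of "x+y" "round x + round y"] tnorm_round[of x] tnorm_round[of y] by simp

lemma tnorm_mult_int: "tnorm (of_int k * x) \<le> \<bar>of_int k\<bar> * tnorm x"
  using tnorm_le_int[of "of_int k * x" "k * round x"] tnorm_round[of x]
  by (simp add: abs_mult[symmetric] right_diff_distrib)

lemma tnorm_zero_iff: "tnorm x = 0 \<longleftrightarrow> x \<in> \<int>"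
proof
  assume "tnorm x = 0"
  hence "x = of_int (round x)" using tnorm_round[of x] by simp
  thus "x \<in> \<int>" by (metis Ints_of_int)
next
  assume "x \<in> \<int>" thus "tnorm x = 0" using tnorm_Ints[of x 0] tnorm_le_abs[of 0] tnorm_nonneg[of 0]
    by (auto elim!: Ints_cases simp: tnorm_add_int)
qed

lemma continuous_tnorm: "continuous_on UNIV tnorm"
  unfolding tnorm_def by (intro continuous_intros)

lemma tdist_eq: "tdist x y = tnorm (y - x)"
  unfolding tdist_def using tnorm_minus[of "x - y"] by simp



lemma aseq_dvd: assumes "a_seq u" "a \<le> b" shows "u a dvd u b"
  using assms(2)
proof (induction b)
  case 0 thus ?case by simp
next
  case (Suc b)
  show ?case
  proof (cases "a = Suc b")
    case False
    hence "u a dvd u b" using Suc by simp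
    thus ?thesis using assms(1) unfolding a_seq_def using dvd_trans by blast
  qed simp
qed

lemma aseq_mono: "a_seq u \<Longrightarrow> a < b \<Longrightarrow> u a < u b"
  unfolding a_seq_def strict_mono_def by blast

lemma aseq_ne0: assumes "a_seq u" shows "u n \<noteq> 0"
proof
  assume "u n = 0"
  hence "u (Suc n) = 0" using aseq_dvd[OF assms, of n "Suc n"] by simp
  thus False using \<open>u n = 0\<close> aseq_mono[OF assms, of n "Suc n"] by simp
qed

lemma aseq_pos: assumes "a_seq u" "n \<ge> 1" shows "u n > 0"
proof -
  have "u 1 > 0"
  proof (rule ccontr)
    assume "\<not> u 1 > 0"
    hence "u 1 < 0" using aseq_ne0[OF assms(1), of 1] by linarith
    moreover have "u 0 < u 1" using aseq_mono[OF assms(1), of 0 1] by simp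
    moreover have "u 0 dvd u 1" using aseq_dvd[OF assms(1), of 0 1] by simp
    ultimately have "\<bar>u 0\<bar> \<le> \<bar>u 1\<bar>" using aseq_ne0[OF assms(1), of 1]
      by (metis dvd_imp_le_int)
    thus False using \<open>u 1 < 0\<close> \<open>u 0 < u 1\<close> by linarith
  qed
  thus ?thesis using assms aseq_mono[OF assms(1), of 1 n]
    by (cases "n = 1") auto
qed

lemma aseq_abs_le: assumes "a_seq u" "n \<le> M" "1 \<le> M" shows "\<bar>u n\<bar> \<le> u M"
proof (cases "n = 0")
  case True
  have "\<bar>u 0\<bar> \<le> \<bar>u 1\<bar>"
    using aseq_dvd[OF assms(1), of 0 1] aseq_ne0[OF assms(1), of 1] by (simp add: dvd_imp_le_int)
  moreover have "u 1 \<le> u M" using aseq_mono[OF assms(1), of 1 M] assms(3) by (cases "M = 1") auto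
  ultimately show ?thesis using True aseq_pos[OF assms(1), of 1] by simp
next
  case False
  thus ?thesis using aseq_pos[OF assms(1), of n] aseq_mono[OF assms(1), of n M] assms(2)
    by (cases "n = M") auto
qed

lemma ratio_eq: assumes "a_seq u" "n \<ge> 1" shows "u n = ratio u n * u (n - 1)"
proof -
  have "u (n-1) dvd u n" using aseq_dvd[OF assms(1), of "n-1" n] by simp
  thus ?thesis using assms(2) unfolding ratio_def by auto
qed

lemma ratio_ge2: assumes "a_seq u" "n \<ge> 2" shows "ratio u n \<ge> 2"
proof -
  have p: "u (n-1) > 0" using aseq_pos[OF assms(1), of "n-1"] assms(2) by simp
  have l: "u (n-1) < u n" using aseq_mono[OF assms(1), of "n-1" n] assms(2) by simp
  have e: "u n = ratio u n * u (n-1)" using ratio_eq[OF assms(1), of n] assms(2) by simp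
  have "ratio u n > 1"
  proof (rule ccontr)
    assume "\<not> ratio u n > 1"
    hence "ratio u n * u (n-1) \<le> 1 * u (n-1)" using p by (intro mult_right_mono) auto
    thus False using e l by simp
  qed
  thus ?thesis by simp
qed

lemma tnorm_step:
  assumes "a_seq u" "n \<ge> 1" "B > 0" "\<bar>ratio u (Suc n)\<bar> \<le> B"
    "tnorm (of_int (u n) * z) < 1 / (2 * B)"
  shows "tnorm (of_int (u (Suc n)) * z) = \<bar>of_int (ratio u (Suc n))\<bar> * tnorm (of_int (u n) * z)"
proof -
  define y where "y = of_int (u n) * z"
  define q where "q = ratio u (Suc n)"
  define R where "R = round y"
  define \<rho> where "\<rho> = y - of_int R"
  have tr: "tnorm y = \<bar>\<rho>\<bar>" unfolding \<rho>_def R_def by (rule tnorm_round)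
  have e: "of_int (u (Suc n)) * z = of_int (q * R) + of_int q * \<rho>"
    using ratio_eq[OF assms(1), of "Suc n"] unfolding q_def \<rho>_def y_def
    by (simp add: algebra_simps)
  have "\<bar>of_int q * \<rho>\<bar> \<le> of_int B * \<bar>\<rho>\<bar>"
    unfolding abs_mult using assms(4) q_def by (intro mult_right_mono) auto
  also have "\<dots> \<le> of_int B * (1 / (2 * of_int B))" using assms(5) tr y_def assms(3)
    by (intro mult_left_mono) auto
  also have "\<dots> = 1/2" using assms(3) by simp
  finally have small: "\<bar>of_int q * \<rho>\<bar> \<le> 1/2" .
  have "tnorm (of_int (u (Suc n)) * z) = tnorm (of_int q * \<rho>)"
    unfolding e using tnorm_add_int[of "of_int q * \<rho>" "q*R"] by (simp add: add.commute)
  also have "\<dots> = \<bar>of_int q\<bar> * \<bar>\<rho>\<bar>" using tnorm_small[OF small] by (simp add: abs_mult)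
  finally show ?thesis using tr y_def q_def by simp
qed

lemma bounded_small_int:
  assumes "a_seq u" "\<forall>n. \<bar>ratio u n\<bar> \<le> B" "N \<ge> 1"
    "\<forall>n\<ge>N. tnorm (of_int (u n) * z) < 1 / (2 * B)"
  shows "of_int (u N) * z \<in> \<int>"
proof -
  have "2 \<le> ratio u 2" using ratio_ge2[OF assms(1), of 2] by simp
  hence B: "B > 0" using assms(2)[rule_format, of 2] by linarith
  have grow: "tnorm (of_int (u (N + k)) * z) \<ge> 2^k * tnorm (of_int (u N) * z)" for k
  proof (induction k)
    case 0 thus ?case by simp
  next
    case (Suc k)
    have "tnorm (of_int (u (Suc (N + k))) * z) = \<bar>of_int (ratio u (Suc (N+k)))\<bar> * tnorm (of_int (u (N+k)) * z)"
      using assms B by (intro tnorm_step) auto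
    also have "\<dots> \<ge> 2 * tnorm (of_int (u (N+k)) * z)"
      using ratio_ge2[OF assms(1), of "Suc (N+k)"] assms(3) tnorm_nonneg
      by (intro mult_right_mono) auto
    finally show ?case using Suc by simp
  qed
  define t where "t = tnorm (of_int (u N) * z)"
  have "t = 0"
  proof (rule ccontr)
    assume "t \<noteq> 0"
    hence t: "t > 0" using tnorm_nonneg[of "of_int (u N) * z"] t_def by linarith
    obtain k where k: "1 / t < 2 ^ k" using real_arch_pow[of 2 "1/t"] by auto
    hence "1 < 2^k * t" using t by (simp add: field_simps)
    moreover have "2^k * t \<le> tnorm (of_int (u (N + k)) * z)" using grow[of k] by (simp add: t_def)
    ultimately show False using tnorm_le_half[of "of_int (u (N + k)) * z"] by linarith
  qed
  thus ?thesis using tnorm_zero_iff t_def by simp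
qed

lemma s_u_add: assumes "x \<in> s_u u" "y \<in> s_u u" shows "x + y \<in> s_u u"
proof -
  have lim: "((\<lambda>n. tnorm (of_int (u n) * x) + tnorm (of_int (u n) * y)) \<longlongrightarrow> 0) sequentially"
    using assms unfolding s_u_def by (auto intro: tendsto_add_zero)
  have "((\<lambda>n. tnorm (of_int (u n) * (x + y))) \<longlongrightarrow> 0) sequentially"
  proof (rule tendsto_sandwich[where f="\<lambda>_. 0"])
    show "\<forall>\<^sub>F n in sequentially. 0 \<le> tnorm (of_int (u n) * (x + y))" by (simp add: tnorm_nonneg)
    show "\<forall>\<^sub>F n in sequentially. tnorm (of_int (u n) * (x + y)) \<le> tnorm (of_int (u n) * x) + tnorm (of_int (u n) * y)"
      by (simp add: distrib_left tnorm_triangle)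
  qed (use lim in auto)
  thus ?thesis unfolding s_u_def by simp
qed

lemma bounded_s_u:
  assumes "a_seq u" "\<forall>n. \<bar>ratio u n\<bar> \<le> B" "\<forall>n. tnorm (of_int (u n) * z) < 1 / (2 * B)"
  shows "z \<in> s_u u" "z \<in> \<rat>"
proof -
  have i: "of_int (u 1) * z \<in> \<int>" using bounded_small_int[OF assms(1,2), of 1 z] assms(3) by auto
  have "tnorm (of_int (u n) * z) = 0" if "n \<ge> 1" for n
  proof -
    have "u 1 dvd u n" using aseq_dvd[OF assms(1), of 1 n] that by simp
    then obtain c where c: "u n = u 1 * c" by (rule dvdE)
    have e: "of_int (u n) * z = of_int c * (of_int (u 1) * z)" using c by simp
    have m: "of_int c * (of_int (u 1) * z) \<in> \<int>" by (rule Ints_mult[OF Ints_of_int i])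
    have "of_int (u n) * z \<in> \<int>" unfolding e by (rule m)
    thus ?thesis using tnorm_zero_iff by blast
  qed
  hence "eventually (\<lambda>n. tnorm (of_int (u n) * z) = 0) sequentially"
    by (auto simp: eventually_sequentially)
  hence "((\<lambda>n. tnorm (of_int (u n) * z)) \<longlongrightarrow> 0) sequentially" by (rule tendsto_eventually)
  thus "z \<in> s_u u" unfolding s_u_def by simp
  obtain k where k: "of_int (u 1) * z = of_int k" using i by (auto elim: Ints_cases)
  have "u 1 \<noteq> 0" using aseq_ne0[OF assms(1)] by simp
  hence "z = of_int k / of_int (u 1)" using k by (simp add: field_simps)
  thus "z \<in> \<rat>" by simp
qed



locale blk =
  fixes u :: "nat \<Rightarrow> int" and m :: "nat \<Rightarrow> nat"
  assumes aseq: "a_seq u" and m0: "2 \<le> m 0" and mmono: "\<And>k. m k < m (Suc k)"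
    and Qbig: "\<And>k. int k + 2 \<le> ratio u (m k)"
begin

definition v :: "nat \<Rightarrow> real" where "v k = of_int (u (m k - 1))"
definition w :: "nat \<Rightarrow> real" where "w k = of_int (u (m k))"
definition Q :: "nat \<Rightarrow> real" where "Q k = of_int (ratio u (m k))"

lemma m_ge: "m k \<ge> k + 2"
proof (induction k)
  case 0 thus ?case using m0 by simp
next
  case (Suc k) thus ?case using mmono[of k] by simp
qed

lemma m_less: "l < j \<Longrightarrow> m l < m j"
  by (rule lift_Suc_mono_less[of m, OF mmono])

lemma m_le: "l \<le> j \<Longrightarrow> m l \<le> m j"
  using m_less[of l j] by (cases "l = j") auto

lemma v_pos: "v k > 0"
  unfolding v_def using aseq_pos[OF aseq, of "m k - 1"] m_ge[of k] by simp

lemma w_eq: "w k = Q k * v k"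
  unfolding w_def Q_def v_def using ratio_eq[OF aseq, of "m k"] m_ge[of k]
  by (simp flip: of_int_mult)

lemma Q_ge: "Q k \<ge> real k + 2"
  unfolding Q_def using Qbig[of k] by linarith

lemma Q_ge2: "Q k \<ge> 2" using Q_ge[of k] by simp

lemma w_pos: "w k > 0" using w_eq[of k] v_pos[of k] Q_ge2[of k] by simp

lemma w_le_v: "w k \<le> v (Suc k)"
proof -
  have "m k \<le> m (Suc k) - 1" using mmono[of k] by simp
  hence "u (m k) \<le> u (m (Suc k) - 1)"
    using aseq_mono[OF aseq, of "m k" "m (Suc k) - 1"] by (cases "m k = m (Suc k) - 1") auto
  thus ?thesis unfolding w_def v_def by simp
qed

lemma v_ge_2w: "v (Suc k) \<ge> 2 * v k"
proof -
  have "2 * v k \<le> Q k * v k" using Q_ge2[of k] v_pos[of k] by (intro mult_right_mono) auto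
  thus ?thesis using w_le_v[of k] w_eq[of k] by linarith
qed

lemma v_ge_pow: "v k \<ge> 2 ^ k"
proof (induction k)
  case 0
  have "m 0 - 1 \<ge> 1" using m0 by simp
  hence "u (m 0 - 1) > 0" by (rule aseq_pos[OF aseq])
  hence "u (m 0 - 1) \<ge> 1" by simp
  thus ?case unfolding v_def by simp
next
  case (Suc k) thus ?case using v_ge_2w[of k] by simp
qed

lemma v_ge_w: "v (l + Suc j) \<ge> 2 ^ l * w j"
proof (induction l)
  case 0 thus ?case using w_le_v[of j] by simp
next
  case (Suc l) thus ?case using v_ge_2w[of "l + Suc j"] by simp
qed

definition adm :: "real \<Rightarrow> (nat \<Rightarrow> int) \<Rightarrow> bool" where
  "adm r a \<longleftrightarrow> (\<forall>k. 0 \<le> a k \<and> of_int (a k) \<le> r * Q k)"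

definition ser :: "(nat \<Rightarrow> int) \<Rightarrow> real" where
  "ser a = (\<Sum>k. of_int (a k) / w k)"

lemma term_bound:
  assumes "adm r a" shows "0 \<le> of_int (a k) / w k" "of_int (a k) / w k \<le> r / v k"
proof -
  show "0 \<le> of_int (a k) / w k" using assms w_pos[of k] unfolding adm_def by simp
  have "of_int (a k) / w k \<le> r * Q k / w k"
    using assms w_pos[of k] unfolding adm_def by (simp add: divide_right_mono)
  also have "\<dots> = r / v k" using w_eq[of k] v_pos[of k] Q_ge2[of k] by simp
  finally show "of_int (a k) / w k \<le> r / v k" .
qed

lemma adm_r_nonneg: "adm r a \<Longrightarrow> r \<ge> 0"
proof -
  assume "adm r a"
  hence "0 \<le> r * Q 0" unfolding adm_def by (metis of_int_0_le_iff order_trans)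
  thus "r \<ge> 0" using Q_ge2[of 0] by (simp add: zero_le_mult_iff)
qed

lemma term_bound2:
  assumes "adm r a" shows "of_int (a k) / w k \<le> r * (1/2) ^ k"
proof -
  have "r / v k \<le> r / 2^k"
    using adm_r_nonneg[OF assms] v_ge_pow[of k] v_pos[of k] by (intro divide_left_mono) auto
  moreover have "r / 2^k = r * (1/2)^k" by (simp add: power_one_over)
  ultimately show ?thesis using term_bound(2)[OF assms, of k] by linarith
qed

lemma summable_geo: "summable (\<lambda>k. r * (1/2::real) ^ k)"
  by (intro summable_mult summable_geometric) simp

lemma ser_summable: assumes "adm r a" shows "summable (\<lambda>k. of_int (a k) / w k)"
proof (rule summable_comparison_test'[OF summable_geo[of r], of 0])
  fix n
  have "norm (of_int (a n) / w n) = of_int (a n) / w n" using term_bound(1)[OF assms, of n] by (simp only: real_norm_def abs_of_nonneg)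
  thus "norm (of_int (a n) / w n) \<le> r * (1/2) ^ n" using term_bound2[OF assms, of n] by simp
qed

definition T :: "(nat \<Rightarrow> int) \<Rightarrow> nat \<Rightarrow> real" where
  "T a j = (\<Sum>l. of_int (a (l + Suc j)) / w (l + Suc j))"

lemma ser_split: assumes "adm r a"
  shows "ser a = T a j + (\<Sum>l<j. of_int (a l) / w l) + of_int (a j) / w j"
  unfolding ser_def T_def using suminf_split_initial_segment[OF ser_summable[OF assms], of "Suc j"]
  by simp

lemma T_bounds: assumes "adm r a" shows "0 \<le> T a j" "T a j \<le> 2 * r / w j"
proof -
  have s: "summable (\<lambda>l. of_int (a (l + Suc j)) / w (l + Suc j))"
    using summable_iff_shift[of "\<lambda>k. of_int (a k) / w k" "Suc j", THEN iffD2, OF ser_summable[OF assms]] .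
  show "0 \<le> T a j" unfolding T_def using term_bound(1)[OF assms] by (intro suminf_nonneg[OF s]) auto
  have g: "(\<lambda>l. r / w j * (1/2) ^ l) sums (r / w j * 2)"
    using sums_mult[OF geometric_sums[of "1/2::real"], of "r / w j"] by simp
  have le: "of_int (a (l + Suc j)) / w (l + Suc j) \<le> r / w j * (1/2) ^ l" for l
  proof -
    have "of_int (a (l + Suc j)) / w (l + Suc j) \<le> r / v (l + Suc j)" by (rule term_bound(2)[OF assms])
    also have "\<dots> \<le> r / (2^l * w j)"
      using adm_r_nonneg[OF assms] v_ge_w[of l j] w_pos[of j] v_pos[of "l + Suc j"] by (intro divide_left_mono) auto
    also have "\<dots> = r / w j * (1/2) ^ l" by (simp add: power_one_over)
    finally show ?thesis .
  qed
  have "T a j \<le> r / w j * 2" unfolding T_def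
    using suminf_le[OF le s sums_summable[OF g]] sums_unique[OF g] by simp
  thus "T a j \<le> 2 * r / w j" by (simp add: mult.commute)
qed

lemma int_part:
  assumes "\<forall>l<j. u (m l) dvd d"
  shows "of_int d * (\<Sum>l<j. of_int (a l) / w l) \<in> \<int>"
proof -
  have eq: "of_int d * (\<Sum>l<j. of_int (a l) / w l) = (\<Sum>l<j. of_int (d div u (m l) * a l))"
  proof (unfold sum_distrib_left, rule sum.cong[OF refl])
    fix l assume "l \<in> {..<j}"
    hence dv: "u (m l) dvd d" using assms by auto
    have ne: "u (m l) \<noteq> 0" using aseq_ne0[OF aseq] by simp
    from dv obtain c where c: "d = u (m l) * c" by (rule dvdE)
    show "of_int d * (of_int (a l) / w l) = of_int (d div u (m l) * a l)"
      unfolding w_def using c ne by simp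
  qed
  show ?thesis unfolding eq by (intro Ints_sum Ints_of_int)
qed

lemma tnorm_d:
  assumes "adm r a" "\<forall>l<j. u (m l) dvd d"
  shows "tnorm (of_int d * ser a) = tnorm (of_int d * (of_int (a j) / w j + T a j))"
proof -
  have "of_int d * ser a = of_int d * (of_int (a j) / w j + T a j) + of_int d * (\<Sum>l<j. of_int (a l) / w l)"
    using ser_split[OF assms(1), of j] by (simp add: algebra_simps)
  thus ?thesis using tnorm_Ints[OF int_part[OF assms(2)]] by simp
qed

lemma lemmaA:
  assumes "adm r a" "\<forall>l<j. u (m l) dvd d" "\<bar>of_int d\<bar> \<le> v j"
  shows "tnorm (of_int d * ser a) \<le> (of_int (a j) + 2 * r) / Q j"
proof -
  define y where "y = of_int (a j) / w j + T a j"
  have y0: "y \<ge> 0" unfolding y_def using term_bound(1)[OF assms(1), of j] T_bounds(1)[OF assms(1), of j] by simp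
  have "tnorm (of_int d * ser a) = tnorm (of_int d * y)" using tnorm_d[OF assms(1,2)] y_def by simp
  also have "\<dots> \<le> \<bar>of_int d\<bar> * y" using tnorm_le_abs[of "of_int d * y"] y0 by (simp add: abs_mult)
  also have "\<dots> \<le> v j * y" using assms(3) y0 by (rule mult_right_mono)
  also have "\<dots> \<le> v j * (of_int (a j) / w j + 2 * r / w j)"
    unfolding y_def using T_bounds(2)[OF assms(1), of j] v_pos[of j] by (intro mult_left_mono) auto
  also have "\<dots> = (of_int (a j) + 2 * r) / Q j"
    using w_eq[of j] v_pos[of j] Q_ge2[of j] by (simp add: field_simps)
  finally show ?thesis .
qed

lemma lemmaB:
  assumes "adm r a" "r \<le> 1/4"
  shows "tnorm (of_int (u (m j - 1)) * ser a) \<ge> of_int (a j) / Q j"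
proof -
  have dv: "\<forall>l<j. u (m l) dvd u (m j - 1)"
  proof (intro allI impI)
    fix l assume "l < j" hence "m l \<le> m j - 1" using m_less[of l j] by simp
    thus "u (m l) dvd u (m j - 1)" by (rule aseq_dvd[OF aseq])
  qed
  define y where "y = of_int (a j) / w j + T a j"
  have yv: "v j * y = of_int (a j) / Q j + v j * T a j"
    unfolding y_def using w_eq[of j] v_pos[of j] Q_ge2[of j] by (simp add: field_simps)
  have t0: "0 \<le> v j * T a j" using T_bounds(1)[OF assms(1), of j] v_pos[of j] by simp
  have t1: "v j * T a j \<le> v j * (2 * r / w j)"
    using T_bounds(2)[OF assms(1), of j] v_pos[of j] by (intro mult_left_mono) auto
  have t2: "v j * (2 * r / w j) = 2 * r / Q j" using w_eq[of j] v_pos[of j] Q_ge2[of j] by simp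
  have t3: "2 * r / Q j \<le> r" using Q_ge2[of j] adm_r_nonneg[OF assms(1)] by (simp add: field_simps mult_left_mono)
  have aQ0: "0 \<le> of_int (a j) / Q j" using assms(1) Q_ge2[of j] unfolding adm_def by simp
  have aQ: "of_int (a j) / Q j \<le> r" using assms(1) Q_ge2[of j] unfolding adm_def by (simp add: field_simps)
  have "\<bar>v j * y\<bar> \<le> 1/2" using yv t0 t1 t2 t3 aQ aQ0 assms(2) by linarith
  hence "tnorm (v j * y) = \<bar>v j * y\<bar>" by (rule tnorm_small)
  moreover have "tnorm (of_int (u (m j - 1)) * ser a) = tnorm (v j * y)"
    using tnorm_d[OF assms(1) dv] y_def v_def by simp
  ultimately show ?thesis using yv t0 by simp
qed

lemma block:
  obtains j where "n < m j" "\<forall>l<j. m l \<le> n"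
proof -
  have ex: "\<exists>j. n < m j" using m_ge[of n] by (intro exI[of _ n]) simp
  define j where "j = (LEAST j. n < m j)"
  have "n < m j" unfolding j_def by (rule LeastI_ex[OF ex])
  moreover have "\<forall>l<j. m l \<le> n" unfolding j_def using not_less_Least by (metis not_le)
  ultimately show ?thesis using that by blast
qed

lemma u_dvd_block: assumes "\<forall>l<j. m l \<le> n" shows "\<forall>l<j. u (m l) dvd u n"
  using assms aseq_dvd[OF aseq] by blast

lemma u_le_block: assumes "n < m j" shows "\<bar>of_int (u n)\<bar> \<le> v j"
proof -
  have "\<bar>u n\<bar> \<le> u (m j - 1)" using aseq_abs_le[OF aseq, of n "m j - 1"] assms m_ge[of j] by simp
  thus ?thesis unfolding v_def by (simp flip: of_int_abs)
qed

lemma ser_notin: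
  assumes "adm r a" "r \<le> 1/4" "c > 0" "\<forall>K. \<exists>k\<ge>K. of_int (a k) \<ge> c * Q k"
  shows "ser a \<notin> s_u u"
proof
  assume "ser a \<in> s_u u"
  hence "((\<lambda>n. tnorm (of_int (u n) * ser a)) \<longlongrightarrow> 0) sequentially" unfolding s_u_def by simp
  from order_tendstoD(2)[OF this assms(3)] obtain N where N: "\<forall>n\<ge>N. tnorm (of_int (u n) * ser a) < c"
    by (auto simp: eventually_sequentially)
  obtain k where k: "k \<ge> N" "of_int (a k) \<ge> c * Q k" using assms(4) by blast
  have "m k - 1 \<ge> N" using m_ge[of k] k(1) by simp
  hence "tnorm (of_int (u (m k - 1)) * ser a) < c" using N by simp
  moreover have "tnorm (of_int (u (m k - 1)) * ser a) \<ge> of_int (a k) / Q k" by (rule lemmaB[OF assms(1,2)])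
  moreover have "of_int (a k) / Q k \<ge> c" using k(2) Q_ge2[of k] by (simp add: field_simps)
  ultimately show False by linarith
qed

lemma ser_in:
  assumes "adm r a" "r \<le> 1/4" "\<forall>e>0. \<exists>K. \<forall>k\<ge>K. of_int (a k) \<le> e * Q k"
  shows "ser a \<in> s_u u"
proof -
  have "\<forall>\<^sub>F n in sequentially. tnorm (of_int (u n) * ser a) < e" if e: "e > 0" for e
  proof -
    obtain K where K: "\<forall>k\<ge>K. of_int (a k) \<le> (e/2) * Q k" using assms(3) e by (meson half_gt_zero)
    obtain J0 :: nat where J0: "1 / e < real J0" using reals_Archimedean2 by blast
    define J where "J = max K J0"
    have "tnorm (of_int (u n) * ser a) < e" if n: "n \<ge> m J" for n
    proof -
      obtain j where j: "n < m j" "\<forall>l<j. m l \<le> n" by (rule block)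
      have "J < j"
      proof (rule ccontr)
        assume "\<not> J < j" hence "m j \<le> m J" using m_le by simp
        thus False using j(1) n by simp
      qed
      have "tnorm (of_int (u n) * ser a) \<le> (of_int (a j) + 2 * r) / Q j"
        by (rule lemmaA[OF assms(1) u_dvd_block[OF j(2)] u_le_block[OF j(1)]])
      also have "\<dots> = of_int (a j) / Q j + 2 * r / Q j" by (simp add: add_divide_distrib)
      also have "of_int (a j) / Q j \<le> e/2" using K \<open>J < j\<close> J_def Q_ge2[of j] by (simp add: field_simps)
      also have "2 * r / Q j \<le> (1/2) / Q j" using assms(2) Q_ge2[of j] by (intro divide_right_mono) auto
      also have "(1/2) / Q j < e / 2"
      proof -
        have "real j > 1 / e" using J0 \<open>J < j\<close> J_def by simp
        hence "Q j > 1 / e" using Q_ge[of j] by linarith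
        thus ?thesis using e Q_ge2[of j] by (simp add: field_simps)
      qed
      finally show ?thesis by simp
    qed
    thus ?thesis unfolding eventually_sequentially by blast
  qed
  hence "((\<lambda>n. tnorm (of_int (u n) * ser a)) \<longlongrightarrow> 0) sequentially"
    by (intro order_tendstoI) (auto intro: always_eventually tnorm_nonneg less_le_trans[OF _ tnorm_nonneg])
  thus ?thesis unfolding s_u_def by simp
qed

end


context blk begin

lemma ser_diff:
  assumes "adm r a" "adm r b" "\<forall>k<L. a k = b k"
  shows "\<bar>ser a - ser b\<bar> \<le> 2 * r / 2 ^ L"
proof -
  define f where "f k = of_int (a k) / w k - of_int (b k) / w k" for k
  have sf: "summable f" unfolding f_def using ser_summable[OF assms(1)] ser_summable[OF assms(2)]
    by (rule summable_diff)
  have e1: "ser a - ser b = suminf f" unfolding ser_def f_def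
    using suminf_diff[OF ser_summable[OF assms(1)] ser_summable[OF assms(2)]] by simp
  have "suminf f = (\<Sum>n. f (n + L)) + sum f {..<L}" by (rule suminf_split_initial_segment[OF sf])
  moreover have "sum f {..<L} = 0" using assms(3) unfolding f_def by simp
  ultimately have e2: "ser a - ser b = (\<Sum>n. f (n + L))" using e1 by simp
  define g where "g n = r * (1/2) ^ L * (1/2) ^ n" for n
  have gs: "g sums (r * (1/2) ^ L * 2)"
    unfolding g_def using sums_mult[OF geometric_sums[of "1/2::real"], of "r * (1/2)^L"] by simp
  have fb: "\<bar>f (n + L)\<bar> \<le> g n" for n
  proof -
    have "\<bar>f (n + L)\<bar> \<le> r * (1/2) ^ (n + L)"
      using term_bound(1)[OF assms(1), of "n+L"] term_bound(1)[OF assms(2), of "n+L"]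
        term_bound2[OF assms(1), of "n+L"] term_bound2[OF assms(2), of "n+L"]
      unfolding f_def by linarith
    thus ?thesis unfolding g_def by (simp add: power_add mult_ac)
  qed
  have sa: "summable (\<lambda>n. \<bar>f (n + L)\<bar>)"
    by (rule summable_comparison_test'[OF sums_summable[OF gs], of 0]) (use fb in auto)
  have "\<bar>\<Sum>n. f (n + L)\<bar> \<le> (\<Sum>n. \<bar>f (n + L)\<bar>)" by (rule summable_rabs[OF sa])
  also have "\<dots> \<le> suminf g" by (rule suminf_le[OF fb sa sums_summable[OF gs]])
  also have "\<dots> = r * (1/2) ^ L * 2" using sums_unique[OF gs] by simp
  also have "\<dots> = 2 * r / 2 ^ L" by (simp add: power_one_over)
  finally show ?thesis using e2 by simp
qed

lemma floor_big:
  assumes "r > 0" "real k \<ge> 2 / r"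
  shows "of_int \<lfloor>r * Q k\<rfloor> \<ge> (r/2) * Q k"
proof -
  have "Q k \<ge> 2 / r" using Q_ge[of k] assms(2) by linarith
  hence "r * Q k \<ge> 2" using assms(1) by (simp add: field_simps)
  thus ?thesis using floor_correct[of "r * Q k"] by linarith
qed

lemma floor_infinitely:
  assumes "r > 0" shows "\<forall>K. \<exists>k\<ge>K. of_int \<lfloor>r * Q k\<rfloor> \<ge> (r/2) * Q k"
proof
  fix K :: nat
  obtain N :: nat where N: "2 / r < real N" using reals_Archimedean2 by blast
  show "\<exists>k\<ge>K. of_int \<lfloor>r * Q k\<rfloor> \<ge> (r/2) * Q k"
    using floor_big[OF assms, of "max K N"] N by (intro exI[of _ "max K N"]) auto
qed

lemma unbounded_witness:
  assumes "c > 0"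
  shows "\<exists>y. tnorm y \<le> c \<and> (\<forall>n. tnorm (of_int (u n) * y) \<le> c) \<and> y \<notin> s_u u"
proof -
  define r where "r = min c 1 / 4"
  have r: "r > 0" "r \<le> 1/4" "2 * r \<le> c" using assms unfolding r_def by auto
  define a where "a k = \<lfloor>r * Q k\<rfloor>" for k
  have ad: "adm r a" unfolding adm_def a_def using r Q_ge2 by (auto intro!: mult_nonneg_nonneg order_trans[OF _ Q_ge2])
  have "ser a \<notin> s_u u"
    by (rule ser_notin[OF ad r(2) half_gt_zero[OF r(1)]]) (use floor_infinitely[OF r(1)] a_def in auto)
  moreover have bnd: "(of_int (a j) + 2 * r) / Q j \<le> c" for j
  proof -
    have "(of_int (a j) + 2 * r) / Q j = of_int (a j) / Q j + 2 * r / Q j" by (simp add: add_divide_distrib)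
    also have "of_int (a j) / Q j \<le> r" using ad Q_ge2[of j] unfolding adm_def by (simp add: field_simps)
    also have "2 * r / Q j \<le> r" using Q_ge2[of j] r by (simp add: field_simps mult_left_mono)
    finally show ?thesis using r by simp
  qed
  moreover have "tnorm (of_int (u n) * ser a) \<le> c" for n
  proof -
    obtain j where j: "n < m j" "\<forall>l<j. m l \<le> n" by (rule block)
    show ?thesis using lemmaA[OF ad u_dvd_block[OF j(2)] u_le_block[OF j(1)]] bnd[of j] by linarith
  qed
  moreover have "tnorm (ser a) \<le> c"
  proof -
    have "\<bar>of_int (1::int)\<bar> \<le> v 0" using v_ge_pow[of 0] by simp
    from lemmaA[OF ad _ this] have "tnorm (of_int 1 * ser a) \<le> (of_int (a 0) + 2 * r) / Q 0" by simp
    thus ?thesis using bnd[of 0] by simp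
  qed
  ultimately show ?thesis by blast
qed

end


lemma zero_in_s_u: "0 \<in> s_u u"
  unfolding s_u_def using tnorm_zero_iff[of 0] by simp

lemma fsigma_unfold: assumes "fsigma_in euclideanreal (S::real set)" shows "\<exists>C. countable C \<and> (\<forall>c\<in>C. closed c) \<and> \<Union>C = S"
proof -
  from assms obtain U where U: "countable U" "U \<subseteq> Collect (closedin euclideanreal)" "\<Union>U = S"
    unfolding fsigma_in_def union_of_def by blast
  have "\<forall>c\<in>U. closed c" using U(2) closed_closedin by blast
  thus ?thesis using U by blast
qed

lemma closed_avoid:
  assumes "closed S" "x \<notin> S"
  shows "\<exists>d>0. \<forall>y. \<bar>y - x\<bar> < d \<longrightarrow> y \<notin> (S::real set)"
proof -
  have "open (- S)" using assms(1) by (simp add: open_Compl)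
  then obtain d where "d > 0" "ball x d \<subseteq> - S" using assms(2) open_contains_ball by blast
  show ?thesis
  proof (intro exI[of _ d] conjI allI impI)
    fix y assume "\<bar>y - x\<bar> < d"
    hence "y \<in> ball x d" by (simp add: dist_real_def abs_minus_commute)
    thus "y \<notin> S" using \<open>ball x d \<subseteq> - S\<close> by blast
  qed (rule \<open>d > 0\<close>)
qed

context blk begin

lemma floor_bounds:
  assumes "0 \<le> s" "s \<le> t"
  shows "0 \<le> \<lfloor>s * Q k\<rfloor>" "of_int \<lfloor>s * Q k\<rfloor> \<le> t * Q k"
proof -
  have q: "Q k \<ge> 0" using Q_ge2[of k] by simp
  show "0 \<le> \<lfloor>s * Q k\<rfloor>" using assms q by simp
  have "s * Q k \<le> t * Q k" using assms q by (intro mult_right_mono) auto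
  thus "of_int \<lfloor>s * Q k\<rfloor> \<le> t * Q k" using of_int_floor_le[of "s * Q k"] by linarith
qed

lemma not_fsigma: "\<not> fsigma_in euclideanreal (s_u u)"
proof
  assume "fsigma_in euclideanreal (s_u u)"
  from fsigma_unfold[OF this] obtain C where C: "countable C" "\<forall>c\<in>C. closed c" "\<Union>C = s_u u"
    by (elim exE conjE)
  have Cne: "C \<noteq> {}" using C(3) zero_in_s_u[of u] by auto
  define F where "F i = from_nat_into C i" for i
  have Fcl: "closed (F i)" for i using C(2) from_nat_into[OF Cne] F_def by auto
  have Fsub: "F i \<subseteq> s_u u" for i using C(3) from_nat_into[OF Cne] F_def by auto
  have Fcov: "\<exists>i. x \<in> F i" if xs: "x \<in> s_u u" for x
  proof -
    obtain c where c: "c \<in> C" "x \<in> c" using xs C(3) by auto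
    have "F (to_nat_on C c) = c" unfolding F_def using from_nat_into_to_nat_on[OF C(1) c(1)] .
    thus ?thesis using c by blast
  qed
  define r :: "nat \<Rightarrow> real" where "r i = 1 / (4 * (real i + 1))" for i
  have r_pos: "r i > 0" for i unfolding r_def by simp
  have r_le: "r i \<le> 1/4" for i unfolding r_def by (simp add: field_simps)
  have r_anti: "i \<le> j \<Longrightarrow> r j \<le> r i" for i j unfolding r_def by (simp add: field_simps)
  define ext where "ext i s = (\<lambda>k. if k < fst s then snd s k else \<lfloor>r i * Q k\<rfloor>)" for i and s :: "nat \<times> (nat \<Rightarrow> int)"
  define good where "good i s L' \<longleftrightarrow> fst s < L' \<and> (\<forall>y. \<bar>y - ser (ext i s)\<bar> \<le> 2 * (1/4) / 2 ^ L' \<longrightarrow> y \<notin> F i)"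
    for i and s :: "nat \<times> (nat \<Rightarrow> int)" and L'
  define step where "step i s = (SOME L'. good i s L', ext i s)" for i and s :: "nat \<times> (nat \<Rightarrow> int)"
  define st where "st = rec_nat (0, \<lambda>_. 0) step"
  have st0: "st 0 = (0, \<lambda>_. 0)" unfolding st_def by simp
  have stS: "st (Suc i) = step i (st i)" for i unfolding st_def by simp
  define L where "L i = fst (st i)" for i
  define P where "P i = snd (st i)" for i
  have PS: "P (Suc i) = (\<lambda>k. if k < L i then P i k else \<lfloor>r i * Q k\<rfloor>)" for i
    unfolding P_def L_def stS step_def ext_def by simp
  have LS: "L (Suc i) = (SOME L'. good i (st i) L')" for i
    unfolding L_def stS step_def by simp
  have ext_eq: "ext i (st i) = P (Suc i)" for i unfolding P_def stS step_def by simp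
  have adm_ext: "adm (1/4) (P (Suc i))" if "adm (1/4) (P i)" for i
    using that floor_bounds[OF less_imp_le[OF r_pos[of i]] r_le[of i]] unfolding adm_def PS
    by auto
  have good_ex: "\<exists>L'. good i (st i) L'" if "adm (1/4) (P i)" for i
  proof -
    have ad: "adm (1/4) (P (Suc i))" by (rule adm_ext[OF that])
    have inf: "\<forall>K. \<exists>k\<ge>K. of_int (P (Suc i) k) \<ge> (r i / 2) * Q k"
    proof
      fix K
      obtain k where k: "k \<ge> max K (L i)" "of_int \<lfloor>r i * Q k\<rfloor> \<ge> (r i/2) * Q k"
        using floor_infinitely[OF r_pos[of i]] by blast
      thus "\<exists>k\<ge>K. of_int (P (Suc i) k) \<ge> (r i / 2) * Q k"
        unfolding PS by (intro exI[of _ k]) auto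
    qed
    have "ser (P (Suc i)) \<notin> s_u u"
      by (rule ser_notin[OF ad _ half_gt_zero[OF r_pos[of i]] inf]) simp
    hence "ser (P (Suc i)) \<notin> F i" using Fsub by blast
    then obtain d where d: "d > 0" "\<forall>y. \<bar>y - ser (P (Suc i))\<bar> < d \<longrightarrow> y \<notin> F i"
      using closed_avoid[OF Fcl] by blast
    obtain n where n: "(1/2::real) ^ n < d" using real_arch_pow_inv[OF d(1), of "1/2"] by auto
    define L' where "L' = max n (Suc (L i))"
    have "2 * (1/4) / 2 ^ L' \<le> (1/2::real) ^ n"
    proof -
      have "(1/2::real) ^ L' \<le> (1/2) ^ n" unfolding L'_def by (intro power_decreasing) auto
      moreover have "2 * (1/4) / 2 ^ L' \<le> (1/2::real) ^ L'" by (simp add: power_one_over field_simps)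
      ultimately show ?thesis by linarith
    qed
    hence "good i (st i) L'" unfolding good_def using d(2) n ext_eq[of i]
      by (auto simp: L'_def L_def[symmetric])
    thus ?thesis by blast
  qed
  have inv: "adm (1/4) (P i) \<and> L i \<ge> i" for i
  proof (induction i)
    case 0 show ?case unfolding P_def L_def st0 adm_def using Q_ge2 by (auto intro: order_trans[OF _ Q_ge2])
  next
    case (Suc i)
    have g: "good i (st i) (L (Suc i))" unfolding LS using someI_ex[OF good_ex] Suc by blast
    hence "L (Suc i) > L i" unfolding good_def L_def by simp
    thus ?case using adm_ext Suc by simp
  qed
  have goodS: "good i (st i) (L (Suc i))" for i unfolding LS using someI_ex[OF good_ex] inv by blast
  have Lmono: "L i < L (Suc i)" for i using goodS[of i] unfolding good_def L_def by simp
  have Lle: "i \<le> j \<Longrightarrow> L i \<le> L j" for i j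
    using lift_Suc_mono_less[of L, OF Lmono, of i j] by (cases "i = j") auto
  have stable: "P j k = P i k" if "i \<le> j" "k < L i" for i j k
    using that(1)
  proof (induction j rule: dec_induct)
    case (step j)
    have "k < L j" using that(2) Lle[OF step(1)] by simp
    thus ?case using step(3) unfolding PS by simp
  qed simp
  define a where "a k = P (Suc k) k" for k
  have a_agree: "a k = P i k" if "k < L i" for i k
  proof -
    have "k < L (Suc k)" using inv[of "Suc k"] by simp
    hence "P (max i (Suc k)) k = P (Suc k) k" by (intro stable) auto
    moreover have "P (max i (Suc k)) k = P i k" using that by (intro stable) auto
    ultimately show ?thesis unfolding a_def by simp
  qed
  have a_adm: "adm (1/4) a" using inv unfolding adm_def a_def by blast
  have small_P: "of_int (P j k) \<le> r i * Q k" if "Suc i \<le> j" "k \<ge> L i" for i j k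
    using that(1)
  proof (induction j rule: dec_induct)
    case base thus ?case using that(2) unfolding PS by simp
  next
    case (step j)
    have "of_int \<lfloor>r j * Q k\<rfloor> \<le> r i * Q k"
      using floor_bounds(2)[OF less_imp_le[OF r_pos[of j]] r_anti[of i j]] step(1) by simp
    thus ?case using step(3) unfolding PS by simp
  qed
  have small_a: "of_int (a k) \<le> r i * Q k" if "k \<ge> L i" for i k
    unfolding a_def using small_P[of i "Suc k" k] that inv[of i] by simp
  have "ser a \<in> s_u u"
  proof (rule ser_in[OF a_adm])
    show "\<forall>e>0. \<exists>K. \<forall>k\<ge>K. of_int (a k) \<le> e * Q k"
    proof (intro allI impI)
      fix e :: real assume e: "e > 0"
      obtain i :: nat where i: "1 / e < real i" using reals_Archimedean2 by blast
      have "1 / e < real i + 1" using i by simp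
      hence "1 / (real i + 1) < e" using e by (simp add: field_simps)
      moreover have "r i \<le> 1 / (real i + 1)" unfolding r_def by (simp add: field_simps)
      ultimately have rie: "r i \<le> e" by simp
      have "of_int (a k) \<le> e * Q k" if "k \<ge> L i" for k
      proof -
        have "r i * Q k \<le> e * Q k" using rie Q_ge2[of k] by (intro mult_right_mono) auto
        thus ?thesis using small_a[OF that] by simp
      qed
      hence "\<forall>k\<ge>L i. of_int (a k) \<le> e * Q k" by blast
      thus "\<exists>K. \<forall>k\<ge>K. of_int (a k) \<le> e * Q k" by blast
    qed
  qed simp
  then obtain i where i: "ser a \<in> F i" using Fcov by blast
  have "\<bar>ser a - ser (P (Suc i))\<bar> \<le> 2 * (1/4) / 2 ^ L (Suc i)"
    by (rule ser_diff[OF a_adm inv[THEN conjunct1]]) (use a_agree in auto)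
  hence "ser a \<notin> F i" using goodS[of i] ext_eq[of i] unfolding good_def by simp
  thus False using i by simp
qed

end


lemma unbounded_large:
  assumes "\<not> (\<exists>B. \<forall>n. \<bar>ratio u n\<bar> \<le> B)"
  shows "\<exists>n>N. \<bar>ratio u n\<bar> \<ge> B"
proof (rule ccontr)
  assume "\<not> ?thesis"
  hence h: "\<forall>n>N. \<bar>ratio u n\<bar> \<le> B" by auto
  define B' where "B' = max B (Max ((\<lambda>n. \<bar>ratio u n\<bar>) ` {..N}))"
  have "\<bar>ratio u n\<bar> \<le> B'" for n
  proof (cases "n \<le> N")
    case True
    hence "\<bar>ratio u n\<bar> \<le> Max ((\<lambda>n. \<bar>ratio u n\<bar>) ` {..N})" by (intro Max_ge) auto
    thus ?thesis unfolding B'_def by simp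
  next
    case False
    hence "\<bar>ratio u n\<bar> \<le> B" using h by simp
    thus ?thesis unfolding B'_def by simp
  qed
  thus False using assms by blast
qed

lemma exists_blk:
  assumes "a_seq u" "\<not> (\<exists>B. \<forall>n. \<bar>ratio u n\<bar> \<le> B)"
  shows "\<exists>m. blk u m"
proof -
  have "\<forall>N B. \<exists>n. n > N \<and> ratio u n \<ge> B"
  proof (intro allI)
    fix N :: nat and B :: int
    obtain n where n: "n > max N 1" "\<bar>ratio u n\<bar> \<ge> B" using unbounded_large[OF assms(2)] by blast
    have "ratio u n \<ge> 2" using ratio_ge2[OF assms(1), of n] n(1) by simp
    thus "\<exists>n. n > N \<and> ratio u n \<ge> B" using n by (intro exI[of _ n]) auto
  qed
  then obtain g where g: "\<And>N B. g N B > N \<and> ratio u (g N B) \<ge> B" by metis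
  define m where "m = rec_nat (g 1 2) (\<lambda>k mk. g mk (int (Suc k) + 2))"
  have m0: "m 0 = g 1 2" unfolding m_def by simp
  have mS: "m (Suc k) = g (m k) (int (Suc k) + 2)" for k unfolding m_def by simp
  have "blk u m"
  proof
    show "a_seq u" by (rule assms(1))
    show "2 \<le> m 0" using g[of 1 2] m0 by simp
    show "m k < m (Suc k)" for k using g[of "m k"] mS[of k] by simp
    show "int k + 2 \<le> ratio u (m k)" for k
      using g[of 1 2] g[of "m (k - 1)" "int k + 2"] m0 mS[of "k - 1"] by (cases k) auto
  qed
  thus ?thesis by blast
qed

lemma rho_term_le:
  "max (tdist x y) (tdist (of_int (u k) * x) (of_int (u k) * y)) \<le> rho u x y"
  unfolding rho_def
proof (rule cSUP_upper)
  show "bdd_above (range (\<lambda>n. max (tdist x y) (tdist (of_int (u n) * x) (of_int (u n) * y))))"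
  proof (rule bdd_aboveI[of _ "1/2"])
    fix z assume "z \<in> range (\<lambda>n. max (tdist x y) (tdist (of_int (u n) * x) (of_int (u n) * y)))"
    then obtain k where "z = max (tdist x y) (tdist (of_int (u k) * x) (of_int (u k) * y))" by blast
    thus "z \<le> 1/2" unfolding tdist_def by (metis max.boundedI tnorm_le_half)
  qed
qed simp

lemma rho_le:
  assumes "tdist x y \<le> c" "\<forall>k. tdist (of_int (u k) * x) (of_int (u k) * y) \<le> c"
  shows "rho u x y \<le> c"
  unfolding rho_def by (rule cSUP_least) (use assms in auto)

lemma closed_K: "closed {y. \<forall>k. tnorm (of_int (u k) * y) \<le> c}"
proof -
  have "{y. \<forall>k. tnorm (of_int (u k) * y) \<le> c} = (\<Inter>k. {y. tnorm (of_int (u k) * y) \<le> c})" by auto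
  moreover have "closed {y. tnorm (of_int (u k) * y) \<le> c}" for k
  proof (rule closed_Collect_le)
    show "continuous_on UNIV (\<lambda>y. tnorm (of_int (u k) * y))"
      by (rule continuous_on_compose2[OF continuous_tnorm]) (auto intro!: continuous_intros)
  qed (rule continuous_on_const)
  ultimately show ?thesis by auto
qed

lemma B_pos: assumes "a_seq u" "\<forall>n. \<bar>ratio u n\<bar> \<le> B" shows "B \<ge> 2"
  using ratio_ge2[OF assms(1), of 2] assms(2)[rule_format, of 2] by simp

lemma bd_rat:
  assumes "a_seq u" "\<forall>n. \<bar>ratio u n\<bar> \<le> B" "x \<in> s_u u"
  shows "x \<in> \<rat>"
proof -
  have B: "B \<ge> 2" by (rule B_pos[OF assms(1,2)])
  have "((\<lambda>n. tnorm (of_int (u n) * x)) \<longlongrightarrow> 0) sequentially" using assms(3) unfolding s_u_def by simp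
  from order_tendstoD(2)[OF this, of "1 / (2 * of_int B)"] B
  obtain N where N: "\<forall>n\<ge>N. tnorm (of_int (u n) * x) < 1 / (2 * of_int B)"
    by (auto simp: eventually_sequentially)
  have i: "of_int (u (max N 1)) * x \<in> \<int>"
    by (rule bounded_small_int[OF assms(1,2)]) (use N in auto)
  obtain k where k: "of_int (u (max N 1)) * x = of_int k" using i by (auto elim: Ints_cases)
  have "u (max N 1) \<noteq> 0" using aseq_ne0[OF assms(1)] by simp
  hence "x = of_int k / of_int (u (max N 1))" using k by (simp add: field_simps)
  thus ?thesis by simp
qed

lemma countable_fsigma: assumes "countable (S::real set)" shows "fsigma_in euclideanreal S"
proof -
  have "S = \<Union>((\<lambda>x. {x}) ` S)" by auto
  moreover have "fsigma_in euclideanreal (\<Union>((\<lambda>x. {x}) ` S))"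
    by (rule fsigma_in_Union) (use assms in \<open>auto intro!: closed_imp_fsigma_in simp flip: closed_closedin\<close>)
  ultimately show ?thesis by simp
qed



lemma bd_tau_star:
  assumes "a_seq u" "\<forall>n. \<bar>ratio u n\<bar> \<le> B"
  shows "tau_star_open u (s_u u)"
  unfolding tau_star_open_def
proof
  fix x assume x: "x \<in> s_u u"
  have B: "B \<ge> 2" by (rule B_pos[OF assms(1,2)])
  define n where "n = nat (2 * B) + 1"
  have n1: "n \<ge> 1" unfolding n_def by simp
  have nB: "1 / real n < 1 / (2 * of_int B)"
    using B unfolding n_def by (simp add: field_simps)
  have "(\<lambda>w. x + w) ` W u n \<subseteq> s_u u"
  proof
    fix y assume "y \<in> (\<lambda>w. x + w) ` W u n"
    then obtain z where z: "z \<in> W u n" "y = x + z" by auto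
    have sub: "{y. rho u y 0 < 1 / real n} \<subseteq> {y. \<forall>k. tnorm (of_int (u k) * y) \<le> 1 / real n}"
    proof (safe)
      fix y k assume "rho u y 0 < 1 / real n"
      moreover have "tnorm (of_int (u k) * y) \<le> rho u y 0"
        using rho_term_le[of y 0 u k] by (simp add: tdist_def)
      ultimately show "tnorm (of_int (u k) * y) \<le> 1 / real n" by simp
    qed
    have "z \<in> {y. \<forall>k. tnorm (of_int (u k) * y) \<le> 1 / real n}"
      using z(1) closure_minimal[OF sub closed_K] unfolding W_def by blast
    hence "\<forall>k. tnorm (of_int (u k) * z) < 1 / (2 * of_int B)" using nB by (auto intro: le_less_trans)
    hence "z \<in> s_u u" by (rule bounded_s_u(1)[OF assms(1,2)])
    thus "y \<in> s_u u" using s_u_add[OF x] z(2) by simp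
  qed
  thus "\<exists>n\<ge>1. (\<lambda>w. x + w) ` W u n \<subseteq> s_u u" using n1 by blast
qed

lemma bd_tau:
  assumes "a_seq u" "\<forall>n. \<bar>ratio u n\<bar> \<le> B"
  shows "tau_open u (s_u u)"
  unfolding tau_open_def
proof (intro ballI)
  fix x assume x: "x \<in> s_u u"
  have B: "B \<ge> 2" by (rule B_pos[OF assms(1,2)])
  have "y \<in> s_u u" if y: "rho u x y < 1 / (2 * of_int B)" for y
  proof -
    have "\<forall>k. tnorm (of_int (u k) * (y - x)) < 1 / (2 * of_int B)"
    proof
      fix k
      have "tdist (of_int (u k) * x) (of_int (u k) * y) \<le> rho u x y" using rho_term_le[of x y u k] by simp
      moreover have "tdist (of_int (u k) * x) (of_int (u k) * y) = tnorm (of_int (u k) * (y - x))"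
        by (simp add: tdist_eq right_diff_distrib)
      ultimately show "tnorm (of_int (u k) * (y - x)) < 1 / (2 * of_int B)" using y by simp
    qed
    hence "y - x \<in> s_u u" by (rule bounded_s_u(1)[OF assms(1,2)])
    from s_u_add[OF x this] show ?thesis by simp
  qed
  moreover have "1 / (2 * real_of_int B) > 0" using B by simp
  ultimately show "\<exists>e>0. \<forall>y. rho u x y < e \<longrightarrow> y \<in> s_u u" by blast
qed

lemma witness_rho:
  assumes "blk u m" "c > 0"
  shows "\<exists>y. rho u 0 y \<le> c \<and> rho u y 0 \<le> c \<and> y \<notin> s_u u"
proof -
  obtain y where y: "tnorm y \<le> c" "\<forall>n. tnorm (of_int (u n) * y) \<le> c" "y \<notin> s_u u"
    using blk.unbounded_witness[OF assms] by blast
  have "rho u 0 y \<le> c" by (rule rho_le) (use y in \<open>auto simp: tdist_eq\<close>)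
  moreover have "rho u y 0 \<le> c" by (rule rho_le) (use y in \<open>auto simp: tdist_def\<close>)
  ultimately show ?thesis using y(3) by blast
qed



lemma unb_blk: assumes "a_seq u" "\<not> (\<exists>B. \<forall>n. \<bar>ratio u n\<bar> \<le> B)" obtains m where "blk u m"
  using exists_blk[OF assms] by blast

theorem theoremE:
  fixes u :: "nat \<Rightarrow> int"
  assumes "a_seq u"
  shows "((\<exists>B. \<forall>n. \<bar>ratio u n\<bar> \<le> B) \<longleftrightarrow> s_u u \<subseteq> \<rat>)
       \<and> (s_u u \<subseteq> \<rat> \<longleftrightarrow> countable (s_u u))
       \<and> (countable (s_u u) \<longleftrightarrow> fsigma_in euclideanreal (s_u u))
       \<and> (fsigma_in euclideanreal (s_u u) \<longleftrightarrow> tau_star_open u (s_u u))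
       \<and> (tau_star_open u (s_u u) \<longleftrightarrow> tau_open u (s_u u))"
proof -
  have ab: "s_u u \<subseteq> \<rat>" if "\<forall>n. \<bar>ratio u n\<bar> \<le> B" for B
    using bd_rat[OF assms that] by blast
  have bc: "s_u u \<subseteq> \<rat> \<Longrightarrow> countable (s_u u)" by (rule countable_subset[OF _ countable_rat])
  have cd: "countable (s_u u) \<Longrightarrow> fsigma_in euclideanreal (s_u u)" by (rule countable_fsigma)
  have da: "\<exists>B. \<forall>n. \<bar>ratio u n\<bar> \<le> B" if fs: "fsigma_in euclideanreal (s_u u)"
  proof (rule ccontr)
    assume nb: "\<not> (\<exists>B. \<forall>n. \<bar>ratio u n\<bar> \<le> B)"
    obtain m where "blk u m" by (rule unb_blk[OF assms nb])
    from blk.not_fsigma[OF this] fs show False by simp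
  qed
  have ae: "tau_star_open u (s_u u)" if "\<forall>n. \<bar>ratio u n\<bar> \<le> B" for B
    by (rule bd_tau_star[OF assms that])
  have af: "tau_open u (s_u u)" if "\<forall>n. \<bar>ratio u n\<bar> \<le> B" for B
    by (rule bd_tau[OF assms that])
  have ea: "\<exists>B. \<forall>n. \<bar>ratio u n\<bar> \<le> B" if ts: "tau_star_open u (s_u u)"
  proof (rule ccontr)
    assume nb: "\<not> (\<exists>B. \<forall>n. \<bar>ratio u n\<bar> \<le> B)"
    obtain m where bl: "blk u m" by (rule unb_blk[OF assms nb])
    have "\<exists>n\<ge>1. (\<lambda>w. 0 + w) ` W u n \<subseteq> s_u u"
      using bspec[OF ts[unfolded tau_star_open_def] zero_in_s_u[of u]] .
    then obtain n where n: "n \<ge> 1" "(\<lambda>w. 0 + w) ` W u n \<subseteq> s_u u" by blast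
    have c: "1 / (2 * real n) > 0" using n(1) by simp
    obtain y where y: "rho u y 0 \<le> 1 / (2 * real n)" "y \<notin> s_u u" using witness_rho[OF bl c] by blast
    have "1 / (2 * real n) < 1 / real n" using n(1) by (simp add: field_simps)
    hence "rho u y 0 < 1 / real n" using y(1) by linarith
    hence "y \<in> {x. rho u x 0 < 1 / real n}" by simp
    hence "y \<in> W u n" unfolding W_def by (rule subsetD[OF closure_subset])
    hence "0 + y \<in> (\<lambda>w. 0 + w) ` W u n" by (rule imageI)
    hence "0 + y \<in> s_u u" by (rule subsetD[OF n(2)])
    hence "y \<in> s_u u" by simp
    thus False using y(2) by simp
  qed
  have fa: "\<exists>B. \<forall>n. \<bar>ratio u n\<bar> \<le> B" if ts: "tau_open u (s_u u)"
  proof (rule ccontr)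
    assume nb: "\<not> (\<exists>B. \<forall>n. \<bar>ratio u n\<bar> \<le> B)"
    obtain m where bl: "blk u m" by (rule unb_blk[OF assms nb])
    have "\<exists>e>0. \<forall>y. rho u 0 y < e \<longrightarrow> y \<in> s_u u"
      using bspec[OF ts[unfolded tau_open_def] zero_in_s_u[of u]] .
    then obtain e where e: "e > 0" "\<forall>y. rho u 0 y < e \<longrightarrow> y \<in> s_u u" by blast
    obtain y where y: "rho u 0 y \<le> e/2" "y \<notin> s_u u" using witness_rho[OF bl half_gt_zero[OF e(1)]] by blast
    have r: "rho u 0 y < e" using y(1) e(1) by linarith
    show False using e(2)[rule_format, OF r] y(2) by simp
  qed
  define A where "A \<longleftrightarrow> (\<exists>B. \<forall>n. \<bar>ratio u n\<bar> \<le> B)"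
  have a2b: "A \<Longrightarrow> s_u u \<subseteq> \<rat>" unfolding A_def using ab by (elim exE)
  have a2e: "A \<Longrightarrow> tau_star_open u (s_u u)" unfolding A_def using ae by (elim exE)
  have a2f: "A \<Longrightarrow> tau_open u (s_u u)" unfolding A_def using af by (elim exE)
  have d2a: "fsigma_in euclideanreal (s_u u) \<Longrightarrow> A" unfolding A_def by (rule da)
  have e2a: "tau_star_open u (s_u u) \<Longrightarrow> A" unfolding A_def by (rule ea)
  have f2a: "tau_open u (s_u u) \<Longrightarrow> A" unfolding A_def by (rule fa)
  show ?thesis unfolding A_def[symmetric]
  proof (intro conjI iffI)
    show "A \<Longrightarrow> s_u u \<subseteq> \<rat>" by (rule a2b)
    show "s_u u \<subseteq> \<rat> \<Longrightarrow> A" by (rule d2a[OF cd[OF bc]])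
    show "s_u u \<subseteq> \<rat> \<Longrightarrow> countable (s_u u)" by (rule bc)
    show "countable (s_u u) \<Longrightarrow> s_u u \<subseteq> \<rat>" by (rule a2b[OF d2a[OF cd]])
    show "countable (s_u u) \<Longrightarrow> fsigma_in euclideanreal (s_u u)" by (rule cd)
    show "fsigma_in euclideanreal (s_u u) \<Longrightarrow> countable (s_u u)" by (rule bc[OF a2b[OF d2a]])
    show "fsigma_in euclideanreal (s_u u) \<Longrightarrow> tau_star_open u (s_u u)" by (rule a2e[OF d2a])
    show "tau_star_open u (s_u u) \<Longrightarrow> fsigma_in euclideanreal (s_u u)" by (rule cd[OF bc[OF a2b[OF e2a]]])
    show "tau_star_open u (s_u u) \<Longrightarrow> tau_open u (s_u u)" by (rule a2f[OF e2a])
    show "tau_open u (s_u u) \<Longrightarrow> tau_star_open u (s_u u)" by (rule a2e[OF f2a])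
  qed
qed

end
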